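(* Let $A\in\mathbb{C}^{n\times n}$, and fix $A^-\in A\{1\}$ and $A^{GD}\in A\{GD\}$. Let $A^{1GD}=A^{-}AA^{GD}$. Then: (i) $AA^{1GD}A=A$ and $A^{1GD}AA^{1GD}=A^{1GD}$; (ii) $A^mA^{1GD} =A^mA^{GD}$ and $A^{1GD}A^m = A^{-}A^m$ for every positive integer $m$; (iii) $AA^{1GD}=P_{R(A),N(AA^{GD})}$; (iv) $A^{1GD}A=P_{R(A^{-}A),N(A)}$.
   Context: For $A\in\mathbb{C}^{n\times n}$, $ind(A)$ is the smallest nonnegative integer $k$ with $\mathrm{rank}(A^k)=\mathrm{rank}(A^{k+1})$. $A\{1\}$ is the set of matrices $X$ with $AXA=A$. With $k=ind(A)$, $A\{GD\}$ is the set of G-Drazin inverses of $A$: matrices $X$ with $AXA=A$, $XA^{k+1}=A^k$, $A^{k+1}X=A^k$. $R(\cdot)$, $N(\cdot)$ denote range and null space; $P_{S,T}$ is the projector onto $S$ along $T$. *)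

theory Defs
  imports "HOL-Analysis.Analysis"
begin

primrec matpow :: "'a::comm_ring_1^'n^'n \<Rightarrow> nat \<Rightarrow> 'a^'n^'n" where
  "matpow A 0 = mat 1"
| "matpow A (Suc k) = A ** matpow A k"

definition ind :: "complex^'n^'n \<Rightarrow> nat" where
  "ind A = (LEAST k. rank (matpow A k) = rank (matpow A (Suc k)))"

definition inner1 :: "complex^'n^'n \<Rightarrow> (complex^'n^'n) set" where
  "inner1 A = {X. A ** X ** A = A}"

definition GD_inv :: "complex^'n^'n \<Rightarrow> (complex^'n^'n) set" where
  "GD_inv A = {X. A ** X ** A = A
              \<and> X ** matpow A (Suc (ind A)) = matpow A (ind A)
              \<and> matpow A (Suc (ind A)) ** X = matpow A (ind A)}"

definition mrange :: "complex^'n^'m \<Rightarrow> (complex^'m) set" where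
  "mrange A = range (\<lambda>x. A *v x)"

definition mnull :: "complex^'n^'m \<Rightarrow> (complex^'n) set" where
  "mnull A = {x. A *v x = 0}"

definition is_proj_onto_along :: "complex^'n^'n \<Rightarrow> (complex^'n) set \<Rightarrow> (complex^'n) set \<Rightarrow> bool" where
  "is_proj_onto_along P S T \<longleftrightarrow>
     subspace S \<and> subspace T \<and> S \<inter> T = {0} \<and>
     (\<forall>x. \<exists>s\<in>S. \<exists>t\<in>T. x = s + t) \<and>
     (\<forall>s\<in>S. \<forall>t\<in>T. P *v (s + t) = s)"

end

theory Submission
  imports Defs
begin

lemma matpow_comm: "matpow A j ** A = A ** matpow A j"
proof (induction j)
  case 0 then show ?case by (simp add: matrix_mul_lid matrix_mul_rid)
next
  case (Suc j)
  have "matpow A (Suc j) ** A = A ** (matpow A j ** A)" by (simp add: matrix_mul_assoc)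
  then show ?case using Suc by simp
qed

lemma matpow_Suc': "matpow A (Suc j) = matpow A j ** A"
  by (simp add: matpow_comm)

lemma idem_proj:
  fixes P :: "complex^'n^'n"
  assumes idem: "P ** P = P" and S: "mrange P = S" and T: "mnull P = T"
  shows "is_proj_onto_along P S T"
proof -
  have PP: "P *v (P *v x) = P *v x" for x
    by (metis idem matrix_vector_mul_assoc)
  have s1: "subspace S" unfolding S[symmetric] mrange_def
    by (metis linear_subspace_image matrix_vector_mul_linear subspace_UNIV)
  have s2: "subspace T" unfolding T[symmetric] mnull_def
    using linear_subspace_kernel by fastforce
  have s3: "S \<inter> T = {0}"
  proof -
    have "x = 0" if "x \<in> S" "x \<in> T" for x
    proof -
      from that obtain y where y: "x = P *v y" unfolding S[symmetric] mrange_def by auto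
      have "P *v x = 0" using that(2) unfolding T[symmetric] mnull_def by auto
      then show ?thesis using y PP by simp
    qed
    moreover have "0 \<in> S" "0 \<in> T" using s1 s2 subspace_0 by auto
    ultimately show ?thesis by blast
  qed
  have s4: "\<forall>x. \<exists>s\<in>S. \<exists>t\<in>T. x = s + t"
  proof
    fix x
    have "P *v x \<in> S" unfolding S[symmetric] mrange_def by auto
    moreover have "x - P *v x \<in> T" unfolding T[symmetric] mnull_def
      by (simp add: matrix_vector_mult_diff_distrib PP)
    ultimately show "\<exists>s\<in>S. \<exists>t\<in>T. x = s + t" by (metis diff_add_cancel add.commute)
  qed
  have s5: "\<forall>s\<in>S. \<forall>t\<in>T. P *v (s + t) = s"
  proof (intro ballI)
    fix s t assume "s \<in> S" "t \<in> T"
    then obtain y where y: "s = P *v y" unfolding S[symmetric] mrange_def by auto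
    have "P *v t = 0" using \<open>t \<in> T\<close> unfolding T[symmetric] mnull_def by auto
    then show "P *v (s + t) = s" using y PP by (simp add: matrix_vector_right_distrib)
  qed
  show ?thesis unfolding is_proj_onto_along_def using s1 s2 s3 s4 s5 by blast
qed

theorem theorem3p3:
  fixes A Am AGD :: "complex^'n^'n"
  assumes "Am \<in> inner1 A" and "AGD \<in> GD_inv A"
  defines "A1GD \<equiv> Am ** A ** AGD"
  shows "(A ** A1GD ** A = A \<and> A1GD ** A ** A1GD = A1GD)
    \<and> (\<forall>m::nat. m \<ge> 1 \<longrightarrow>
           matpow A m ** A1GD = matpow A m ** AGD \<and> A1GD ** matpow A m = Am ** matpow A m)
    \<and> is_proj_onto_along (A ** A1GD) (mrange A) (mnull (A ** AGD))
    \<and> is_proj_onto_along (A1GD ** A) (mrange (Am ** A)) (mnull A)"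
proof -
  have M: "A ** Am ** A = A" using assms(1) by (simp add: inner1_def)
  have G: "A ** AGD ** A = A" using assms(2) by (simp add: GD_inv_def)
  have AX: "A ** A1GD = A ** AGD" unfolding A1GD_def
    by (metis M matrix_mul_assoc)
  have XA: "A1GD ** A = Am ** A" unfolding A1GD_def
    by (metis G matrix_mul_assoc)
  have i1: "A ** A1GD ** A = A" using AX G by simp
  have i2: "A1GD ** A ** A1GD = A1GD"
    by (metis XA A1GD_def M matrix_mul_assoc)
  have ii: "matpow A m ** A1GD = matpow A m ** AGD \<and> A1GD ** matpow A m = Am ** matpow A m"
    if m1: "m \<ge> 1" for m
  proof -
    obtain j where j: "m = Suc j" using m1 by (cases m) auto
    have "matpow A m ** A1GD = matpow A j ** (A ** A1GD)"
      by (simp add: j matpow_Suc' matrix_mul_assoc del: matpow.simps)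
    also have "\<dots> = matpow A m ** AGD"
      by (simp add: AX j matpow_Suc' matrix_mul_assoc del: matpow.simps)
    finally have 1: "matpow A m ** A1GD = matpow A m ** AGD" .
    have "A1GD ** matpow A m = (A1GD ** A) ** matpow A j"
      by (simp add: j matrix_mul_assoc)
    also have "\<dots> = Am ** matpow A m"
      by (simp add: XA j matrix_mul_assoc)
    finally show ?thesis using 1 by simp
  qed
  have idem1: "(A ** AGD) ** (A ** AGD) = A ** AGD"
    by (metis G matrix_mul_assoc)
  have r1: "mrange (A ** AGD) = mrange A"
  proof
    show "mrange (A ** AGD) \<subseteq> mrange A" unfolding mrange_def
      by (auto simp: matrix_vector_mul_assoc[symmetric])
    show "mrange A \<subseteq> mrange (A ** AGD)" unfolding mrange_def
    proof clarsimp
      fix x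
      have "A *v x = (A ** AGD) *v (A *v x)" by (metis G matrix_vector_mul_assoc)
      then show "A *v x \<in> range ((*v) (A ** AGD))" by blast
    qed
  qed
  have iii: "is_proj_onto_along (A ** A1GD) (mrange A) (mnull (A ** AGD))"
    unfolding AX using idem_proj[OF idem1 r1] by simp
  have idem2: "(Am ** A) ** (Am ** A) = Am ** A"
    by (metis M matrix_mul_assoc)
  have n2: "mnull (Am ** A) = mnull A"
  proof
    show "mnull (Am ** A) \<subseteq> mnull A" unfolding mnull_def
    proof clarsimp
      fix x assume "(Am ** A) *v x = 0"
      then have "A *v ((Am ** A) *v x) = 0" by simp
      then show "A *v x = 0" by (metis M matrix_vector_mul_assoc matrix_mul_assoc)
    qed
    show "mnull A \<subseteq> mnull (Am ** A)" unfolding mnull_def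
      by (auto simp: matrix_vector_mul_assoc[symmetric])
  qed
  have iv: "is_proj_onto_along (A1GD ** A) (mrange (Am ** A)) (mnull A)"
    unfolding XA using idem_proj[OF idem2 refl n2] .
  show ?thesis using i1 i2 ii iii iv by blast
qed

end
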